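(* For $n\ge 2$, let $S_n$ denote the bitsum (number of $1$s) of a bimultus bitstring of length $n$ chosen uniformly at random among all bimultus bitstrings of length $n$. Then \[ \lim_{n\to\infty}\frac{\mathbb{E}(S_n)}{n}=\frac12, \qquad \lim_{n\to\infty}\frac{\mathbb{V}(S_n)}{n}=\frac{5+3\sqrt{5}}{40}=0.2927050983\ldots \]
   Context: A finite bitstring (a finite word over $\{0,1\}$) is called bimultus if each of its $1$s has at least one neighboring (adjacent) $1$ and each of its $0$s has at least one neighboring $0$; equivalently, it contains neither an isolated $1$ nor an isolated $0$. Bimultus bitstrings of length $n$ exist for every $n\ge 2$ (e.g. $0\cdots0$). $\mathbb{E}$ and $\mathbb{V}$ denote expectation and variance with respect to the uniform distribution on bimultus bitstrings of length $n$. *)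

theory Defs
  imports "HOL-Probability.Probability"
begin

definition bimultus :: "bool list \<Rightarrow> bool" where
  "bimultus xs \<longleftrightarrow>
     (\<forall>i < length xs. (i + 1 < length xs \<and> xs ! (i + 1) = xs ! i) \<or>
                        (0 < i \<and> xs ! (i - 1) = xs ! i))"

definition bimultus_strings :: "nat \<Rightarrow> bool list set" where
  "bimultus_strings n = {xs. length xs = n \<and> bimultus xs}"

definition bitsum :: "bool list \<Rightarrow> nat" where
  "bitsum xs = count_list xs True"

definition unif_bimultus :: "nat \<Rightarrow> bool list pmf" where
  "unif_bimultus n = pmf_of_set (bimultus_strings n)"

definition E_S :: "nat \<Rightarrow> real" where
  "E_S n = measure_pmf.expectation (unif_bimultus n) (\<lambda>xs. real (bitsum xs))"

definition V_S :: "nat \<Rightarrow> real" where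
  "V_S n = measure_pmf.variance (unif_bimultus n) (\<lambda>xs. real (bitsum xs))"

end

theory Submission
  imports Defs
begin

lemma bimultus_CC:
  "bimultus (a#b#ys) \<longleftrightarrow> a = b \<and> (ys = [] \<or> (hd ys \<noteq> b \<and> bimultus ys) \<or> (hd ys = b \<and> bimultus (b#ys)))"
proof (cases ys)
  case Nil
  then show ?thesis by (auto simp: bimultus_def All_less_Suc2)
next
  case (Cons c zs)
  then show ?thesis
    by (auto simp: bimultus_def All_less_Suc2 nth_Cons split: nat.splits)
qed

lemma bimultus_map_Not: "bimultus (map Not xs) \<longleftrightarrow> bimultus xs"
  unfolding bimultus_def by (auto simp: nth_map)

lemma bimultus_Nil[simp]: "bimultus []" by (simp add: bimultus_def)
lemma bimultus_single[simp]: "\<not> bimultus [a]" by (simp add: bimultus_def)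
lemma bimultus_Cons_hd: "bimultus (a#xs) \<Longrightarrow> xs \<noteq> [] \<and> hd xs = a"
  by (cases xs) (auto simp: bimultus_def)

definition SS :: "nat \<Rightarrow> bool \<Rightarrow> bool list set" where
  "SS n b = {xs. length xs = n \<and> bimultus xs \<and> (xs = [] \<or> hd xs = b)}"

lemma SS_finite: "finite (SS n b)"
proof -
  have "SS n b \<subseteq> {xs. set xs \<subseteq> UNIV \<and> length xs = n}" by (auto simp: SS_def)
  moreover have "finite {xs::bool list. set xs \<subseteq> UNIV \<and> length xs = n}"
    by (rule finite_lists_length_eq) simp
  ultimately show ?thesis by (rule finite_subset)
qed

lemma SS_rec: "SS (Suc (Suc n)) b = (\<lambda>ys. b#b#ys) ` SS n (\<not>b) \<union> Cons b ` SS (Suc n) b"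
proof (rule set_eqI)
  fix xs
  show "xs \<in> SS (Suc (Suc n)) b \<longleftrightarrow> xs \<in> (\<lambda>ys. b#b#ys) ` SS n (\<not>b) \<union> Cons b ` SS (Suc n) b"
  proof
    assume "xs \<in> SS (Suc (Suc n)) b"
    then obtain x y ys where xs: "xs = x#y#ys" and l: "length ys = n" and bm: "bimultus (x#y#ys)" and h: "x = b"
      unfolding SS_def by (cases xs rule: remdups_adj.cases) auto
    from bm have "x = y" by (simp add: bimultus_CC)
    show "xs \<in> (\<lambda>ys. b#b#ys) ` SS n (\<not>b) \<union> Cons b ` SS (Suc n) b"
    proof (cases "ys = [] \<or> hd ys \<noteq> b")
      case True
      then have "ys \<in> SS n (\<not>b)" using bm l h \<open>x = y\<close> by (auto simp: SS_def bimultus_CC)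
      then show ?thesis using xs h \<open>x = y\<close> by auto
    next
      case False
      then have "y#ys \<in> SS (Suc n) b" using bm l h \<open>x = y\<close> by (auto simp: SS_def bimultus_CC)
      then show ?thesis using xs h \<open>x = y\<close> by auto
    qed
  next
    assume "xs \<in> (\<lambda>ys. b#b#ys) ` SS n (\<not>b) \<union> Cons b ` SS (Suc n) b"
    then show "xs \<in> SS (Suc (Suc n)) b"
    proof
      assume "xs \<in> (\<lambda>ys. b#b#ys) ` SS n (\<not>b)"
      then obtain ys where "xs = b#b#ys" "ys \<in> SS n (\<not>b)" by auto
      then show ?thesis by (auto simp: SS_def bimultus_CC)
    next
      assume "xs \<in> Cons b ` SS (Suc n) b"
      then obtain ys where "xs = b#ys" "ys \<in> SS (Suc n) b" by auto
      then show ?thesis by (cases ys) (auto simp: SS_def bimultus_CC dest: bimultus_Cons_hd)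
    qed
  qed
qed

lemma SS_sum_rec:
  "sum f (SS (Suc (Suc n)) b) = sum (\<lambda>ys. f (b#b#ys)) (SS n (\<not>b)) + sum (\<lambda>ys. f (b#ys)) (SS (Suc n) b)"
proof -
  have d: "(\<lambda>ys. b#b#ys) ` SS n (\<not>b) \<inter> Cons b ` SS (Suc n) b = {}"
    by (auto simp: SS_def dest: bimultus_Cons_hd)
  have "sum f (SS (Suc (Suc n)) b) = sum f ((\<lambda>ys. b#b#ys) ` SS n (\<not>b)) + sum f (Cons b ` SS (Suc n) b)"
    unfolding SS_rec by (rule sum.union_disjoint) (auto simp: SS_finite d)
  also have "\<dots> = sum (\<lambda>ys. f (b#b#ys)) (SS n (\<not>b)) + sum (\<lambda>ys. f (b#ys)) (SS (Suc n) b)"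
    by (subst sum.reindex, simp add: inj_on_def, subst sum.reindex, simp_all add: inj_on_def o_def)
  finally show ?thesis .
qed

lemma SS_Not: "SS n (\<not>b) = map Not ` SS n b"
proof (rule set_eqI)
  fix xs
  show "xs \<in> SS n (\<not>b) \<longleftrightarrow> xs \<in> map Not ` SS n b"
  proof
    assume "xs \<in> SS n (\<not>b)"
    then have "map Not xs \<in> SS n b" by (auto simp: SS_def bimultus_map_Not hd_map)
    moreover have "xs = map Not (map Not xs)" by (simp add: o_def)
    ultimately show "xs \<in> map Not ` SS n b" by blast
  next
    assume "xs \<in> map Not ` SS n b"
    then show "xs \<in> SS n (\<not>b)" by (auto simp: SS_def bimultus_map_Not hd_map)
  qed
qed

lemma SS_sum_Not: "sum f (SS n (\<not>b)) = sum (\<lambda>xs. f (map Not xs)) (SS n b)"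
  unfolding SS_Not by (subst sum.reindex) (auto simp: inj_on_def o_def)

definition DD :: "bool list \<Rightarrow> real" where
  "DD xs = sum_list (map (\<lambda>x. if x then 1 else -1) xs)"

lemma DD_Cons: "DD (x#xs) = (if x then 1 else -1) + DD xs" by (simp add: DD_def)
lemma DD_Not: "DD (map Not xs) = - DD xs" by (induction xs) (auto simp: DD_def)
lemma bitsum_DD: "real (bitsum xs) = (real (length xs) + DD xs) / 2"
  by (induction xs) (auto simp: bitsum_def DD_def field_simps)

definition cc :: "nat \<Rightarrow> real" where "cc n = (\<Sum>xs\<in>SS n True. 1)"
definition pp :: "nat \<Rightarrow> real" where "pp n = (\<Sum>xs\<in>SS n True. DD xs)"
definition qq :: "nat \<Rightarrow> real" where "qq n = (\<Sum>xs\<in>SS n True. DD xs ^ 2)"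

lemma SS_0: "SS 0 b = {[]}" by (auto simp: SS_def bimultus_def)
lemma SS_1: "SS (Suc 0) b = {}" by (auto simp: SS_def bimultus_def length_Suc_conv)

lemma cc_0: "cc 0 = 1" and cc_1: "cc (Suc 0) = 0" by (simp_all add: cc_def SS_0 SS_1)
lemma pp_0: "pp 0 = 0" and pp_1: "pp (Suc 0) = 0" by (simp_all add: pp_def SS_0 SS_1 DD_def)
lemma qq_0: "qq 0 = 0" and qq_1: "qq (Suc 0) = 0" by (simp_all add: qq_def SS_0 SS_1 DD_def)

lemma cc_rec: "cc (Suc (Suc n)) = cc n + cc (Suc n)"
  unfolding cc_def SS_sum_rec[of _ _ True] SS_sum_Not by simp

lemma pp_rec: "pp (Suc (Suc n)) = 2 * cc n - pp n + cc (Suc n) + pp (Suc n)"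
  unfolding cc_def pp_def SS_sum_rec[of _ _ True] SS_sum_Not
  by (simp add: DD_Cons DD_Not sum.distrib sum_subtractf)

lemma qq_rec: "qq (Suc (Suc n)) = 4 * cc n - 4 * pp n + qq n + cc (Suc n) + 2 * pp (Suc n) + qq (Suc n)"
proof -
  have "qq (Suc (Suc n)) = (\<Sum>xs\<in>SS n True. 4 - 4 * DD xs + DD xs ^ 2) + (\<Sum>xs\<in>SS (Suc n) True. 1 + 2 * DD xs + DD xs ^ 2)"
    unfolding qq_def SS_sum_rec[of _ _ True] SS_sum_Not
    by (simp add: DD_Cons DD_Not power2_eq_square algebra_simps)
  then show ?thesis unfolding cc_def pp_def qq_def
    by (simp add: sum.distrib sum_subtractf sum_distrib_left)
qed


fun F :: "nat \<Rightarrow> real" where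
  "F 0 = 0" | "F (Suc 0) = 1" | "F (Suc (Suc n)) = F n + F (Suc n)"

lemma F_nonneg: "F n \<ge> 0"
  by (induction n rule: F.induct) auto

lemma F_mono: "F n \<le> F (Suc n)"
  by (cases n rule: F.cases) (auto simp: F_nonneg)

lemma F_pos: "F (Suc n) \<ge> 1"
proof (induction n rule: F.induct)
  case (3 n) then show ?case using F_nonneg[of "Suc n"] by simp
qed auto

lemma cc_F: "cc (Suc n) = F n"
  by (induction n rule: F.induct) (auto simp: cc_rec cc_0 cc_1)

definition HH :: "nat \<Rightarrow> real" where "HH n = pp n - F (Suc n) + F n / 2"

lemma HH_rec: "HH (Suc (Suc n)) = HH (Suc n) - HH n"
proof -
  have "cc n = F (Suc n) - F n" by (cases n) (auto simp: cc_0 cc_F)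
  then show ?thesis unfolding HH_def using pp_rec[of n] cc_F[of n] by (simp add: field_simps)
qed

lemma HH_3: "HH (n + 3) = - HH n"
  using HH_rec[of n] HH_rec[of "Suc n"] by (simp add: numeral_3_eq_3)

lemma HH_bound: "\<bar>HH n\<bar> \<le> 1"
proof (induction n rule: less_induct)
  case (less n)
  show ?case
  proof (cases "n < 3")
    case True
    have h0: "HH 0 = -1" by (simp add: HH_def pp_0)
    have h1: "HH 1 = -1/2" by (simp add: HH_def pp_1)
    have "pp 2 = 2" using pp_rec[of 0] by (simp add: pp_0 pp_1 cc_0 cc_1 numeral_2_eq_2)
    then have h2: "HH 2 = 1/2" by (simp add: HH_def numeral_2_eq_2)
    from True have "n = 0 \<or> n = 1 \<or> n = 2" by auto
    then show ?thesis using h0 h1 h2 by auto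
  next
    case False
    then obtain k where k: "n = k + 3" by (metis add.commute le_Suc_ex not_less)
    then have "\<bar>HH k\<bar> \<le> 1" using less by simp
    then show ?thesis using k HH_3 by simp
  qed
qed

definition RR :: "nat \<Rightarrow> real" where "RR n = 7 * F n / 5 + 2 * pp n - pp (Suc n)"

lemma qq_closed: "qq n = real n * (2 * F n + F (Suc n)) / 5 + RR n"
proof (induction n rule: F.induct)
  case 1 then show ?case by (simp add: RR_def qq_0 pp_0 pp_1)
next
  case 2
  have "pp 2 = 2" using pp_rec[of 0] by (simp add: pp_0 pp_1 cc_0 cc_1 numeral_2_eq_2)
  then show ?case by (simp add: RR_def qq_1 pp_1 numeral_2_eq_2)
next
  case (3 n)
  have c: "cc n = F (Suc n) - F n" by (cases n) (auto simp: cc_0 cc_F)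
  show ?case using 3 pp_rec[of n] pp_rec[of "Suc n"] qq_rec[of n] cc_F[of n] cc_F[of "Suc n"] c
    unfolding RR_def by (simp add: field_simps)
qed


lemma B_split: "bimultus_strings (Suc n) = SS (Suc n) True \<union> SS (Suc n) False"
  by (auto simp: bimultus_strings_def SS_def)

lemma B_disj: "SS (Suc n) True \<inter> SS (Suc n) False = {}"
  by (auto simp: SS_def)

lemma B_sum: "sum f (bimultus_strings (Suc n)) = sum (\<lambda>xs. f xs + f (map Not xs)) (SS (Suc n) True)"
proof -
  have "sum f (bimultus_strings (Suc n)) = sum f (SS (Suc n) True) + sum f (SS (Suc n) False)"
    unfolding B_split by (rule sum.union_disjoint) (auto simp: SS_finite B_disj)
  also have "sum f (SS (Suc n) False) = sum (\<lambda>xs. f (map Not xs)) (SS (Suc n) True)"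
    using SS_sum_Not[of f "Suc n" True] by simp
  finally show ?thesis by (simp add: sum.distrib)
qed

lemma B_card: "real (card (bimultus_strings (Suc n))) = 2 * cc (Suc n)"
  using B_sum[of "\<lambda>_. 1::real" n] by (simp add: cc_def)

lemma B_fin: "finite (bimultus_strings n)"
proof -
  have "bimultus_strings n \<subseteq> {xs. set xs \<subseteq> UNIV \<and> length xs = n}" by (auto simp: bimultus_strings_def)
  moreover have "finite {xs::bool list. set xs \<subseteq> UNIV \<and> length xs = n}"
    by (rule finite_lists_length_eq) simp
  ultimately show ?thesis by (rule finite_subset)
qed

lemma B_ne: "bimultus_strings (Suc (Suc m)) \<noteq> {}"
proof
  assume "bimultus_strings (Suc (Suc m)) = {}"
  then have "real (card (bimultus_strings (Suc (Suc m)))) = 0" by simp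
  then show False using B_card[of "Suc m"] cc_F[of "Suc m"] F_pos[of m] by simp
qed

lemma len_SS: "xs \<in> SS n b \<Longrightarrow> length xs = n" by (simp add: SS_def)

lemma E_S_eq: "E_S (Suc (Suc m)) = real (Suc (Suc m)) / 2"
proof -
  define n where "n = Suc (Suc m)"
  have "E_S n = (\<Sum>xs\<in>bimultus_strings n. real (bitsum xs)) / real (card (bimultus_strings n))"
    unfolding E_S_def unif_bimultus_def n_def
    by (rule integral_pmf_of_set[OF B_ne B_fin])
  also have "(\<Sum>xs\<in>bimultus_strings n. real (bitsum xs)) = (\<Sum>xs\<in>SS n True. real n)"
    unfolding n_def B_sum
    by (rule sum.cong) (auto simp: bitsum_DD DD_Not len_SS field_simps)
  also have "\<dots> = real n * cc n" by (simp add: cc_def)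
  also have "real (card (bimultus_strings n)) = 2 * cc n" unfolding n_def by (rule B_card)
  finally show ?thesis
    using cc_F[of "Suc m"] F_pos[of m] by (simp add: n_def)
qed

lemma V_S_eq: "V_S (Suc (Suc m)) = qq (Suc (Suc m)) / (4 * F (Suc m))"
proof -
  define n where "n = Suc (Suc m)"
  have E: "measure_pmf.expectation (unif_bimultus n) (\<lambda>xs. real (bitsum xs)) = real n / 2"
    using E_S_eq[of m] by (simp add: E_S_def n_def)
  have "V_S n = (\<Sum>xs\<in>bimultus_strings n. (real (bitsum xs) - real n / 2)^2) / real (card (bimultus_strings n))"
    unfolding V_S_def E unfolding unif_bimultus_def n_def
    by (rule integral_pmf_of_set[OF B_ne B_fin])
  also have "(\<Sum>xs\<in>bimultus_strings n. (real (bitsum xs) - real n / 2)^2) = (\<Sum>xs\<in>SS n True. DD xs ^ 2 / 2)"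
    unfolding n_def B_sum
    by (rule sum.cong) (auto simp: bitsum_DD DD_Not len_SS power2_eq_square field_simps)
  also have "\<dots> = qq n / 2" by (simp add: qq_def sum_divide_distrib)
  also have "real (card (bimultus_strings n)) = 2 * cc n" unfolding n_def by (rule B_card)
  finally show ?thesis
    using cc_F[of "Suc m"] F_pos[of m] by (simp add: n_def)
qed


lemma F_closed_aux:
  fixes \<phi> \<psi> :: real
  defines "\<phi> \<equiv> (1 + sqrt 5) / 2"
    and "\<psi> \<equiv> (1 - sqrt 5) / 2"
  shows "F n = (\<phi> ^ n - \<psi> ^ n) / sqrt 5"
proof (induct n rule: F.induct)
  case (3 n)
  assume IH1: "F n = (\<phi> ^ n - \<psi> ^ n) / sqrt 5"
  assume IH2: "F (Suc n) = (\<phi> ^ Suc n - \<psi> ^ Suc n) / sqrt 5"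
  have "F (Suc (Suc n)) = F (Suc n) + F n" by simp
  also have "\<dots> = (\<phi>^n * (\<phi> + 1) - \<psi>^n * (\<psi> + 1)) / sqrt 5"
    by (simp add: IH1 IH2 field_simps)
  also have "\<phi> + 1 = \<phi>\<^sup>2" by (simp add: \<phi>_def field_simps power2_eq_square)
  also have "\<psi> + 1 = \<psi>\<^sup>2" by (simp add: \<psi>_def field_simps power2_eq_square)
  also have "\<phi>^n * \<phi>\<^sup>2 - \<psi>^n * \<psi>\<^sup>2 = \<phi> ^ Suc (Suc n) - \<psi> ^ Suc (Suc n)"
    by (simp add: power2_eq_square)
  finally show "F (Suc (Suc n)) = (\<phi> ^ Suc (Suc n) - \<psi> ^ Suc (Suc n)) / sqrt 5" .
qed (simp_all add: \<phi>_def \<psi>_def field_simps)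

lemma F_closed:
  "F n = (((1 + sqrt 5) / 2) ^ n - ((1 - sqrt 5) / 2) ^ n) / sqrt 5"
  by (rule F_closed_aux)

lemma cancel_aux: "(c::real) \<noteq> 0 \<Longrightarrow> (a / c) / (b / c) = a / b" by simp

lemma r_lim: "(\<lambda>m. F m / F (Suc m)) \<longlonglongrightarrow> (sqrt 5 - 1) / 2"
proof -
  define \<phi> :: real where "\<phi> = (1 + sqrt 5) / 2"
  define \<psi> :: real where "\<psi> = (1 - sqrt 5) / 2"
  define t where "t = \<psi> / \<phi>"
  have s5: "sqrt 5 > (2::real)" by (simp add: real_less_rsqrt)
  have s5': "sqrt 5 < (3::real)" using real_sqrt_less_mono[of 5 "3^2"] by simp
  have ph: "\<phi> > 0" unfolding \<phi>_def using s5 by simp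
  have nt: "norm t < 1" unfolding t_def \<phi>_def \<psi>_def using s5 s5' by (simp add: abs_if field_simps)
  then have "(\<lambda>m. t ^ m) \<longlonglongrightarrow> 0" by (rule LIMSEQ_power_zero)
  then have L: "(\<lambda>m. (1 - t ^ m) / (\<phi> - \<psi> * t ^ m)) \<longlonglongrightarrow> (1 - 0) / (\<phi> - \<psi> * 0)"
    using ph nt by (intro tendsto_intros) auto
  have FE: "(\<lambda>m. (1 - t ^ m) / (\<phi> - \<psi> * t ^ m)) = (\<lambda>m. F m / F (Suc m))"
  proof
    fix m
    have e: "\<psi> ^ m = t ^ m * \<phi> ^ m" using ph by (simp add: t_def power_divide)
    have "F m / F (Suc m) = (\<phi> ^ m - \<psi> ^ m) / (\<phi> ^ Suc m - \<psi> ^ Suc m)"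
      unfolding F_closed[folded \<phi>_def \<psi>_def] using s5 by (intro cancel_aux) simp
    also have "\<dots> = (\<phi> ^ m * (1 - t ^ m)) / (\<phi> ^ m * (\<phi> - \<psi> * t ^ m))"
      by (simp add: e algebra_simps)
    also have "\<dots> = (1 - t ^ m) / (\<phi> - \<psi> * t ^ m)"
      using ph by simp
    finally show "(1 - t ^ m) / (\<phi> - \<psi> * t ^ m) = F m / F (Suc m)" by simp
  qed
  have LE: "(1 - 0) / (\<phi> - \<psi> * 0) = (sqrt 5 - 1) / 2"
    unfolding \<phi>_def using s5 by (simp add: field_simps)
  show ?thesis using L unfolding FE LE .
qed

lemma RR_aux:
  fixes a b h2 h3 :: real
  assumes "0 \<le> a" "a \<le> b" "1 \<le> b" "\<bar>h2\<bar> \<le> 1" "\<bar>h3\<bar> \<le> 1"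
  shows "\<bar>7 * (a + b) / 5 + 2 * ((b + (a + b)) - (a + b) / 2 + h2)
     - (((a + b) + (b + (a + b))) - (b + (a + b)) / 2 + h3)\<bar> \<le> 20 * b"
proof -
  have "h2 \<le> 1" "-h2 \<le> 1" "h3 \<le> 1" "-h3 \<le> 1" using assms(4,5) by auto
  then show ?thesis using assms(1-3) unfolding abs_le_iff by (intro conjI) (simp_all add: field_simps)
qed

lemma aux2: "(b::real) \<ge> 1 \<Longrightarrow> D > 0 \<Longrightarrow> 20 * b / (4 * D * b) = 5 / D"
  by (simp add: field_simps)

lemma RR_bound: "\<bar>RR (Suc (Suc m))\<bar> \<le> 20 * F (Suc m)"
proof -
  have a: "0 \<le> F m" "F m \<le> F (Suc m)" "1 \<le> F (Suc m)" using F_nonneg F_mono F_pos by auto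
  have h: "\<bar>HH (Suc (Suc m))\<bar> \<le> 1" "\<bar>HH (Suc (Suc (Suc m)))\<bar> \<le> 1" using HH_bound by auto
  have p1: "pp (Suc (Suc m)) = F (Suc (Suc (Suc m))) - F (Suc (Suc m)) / 2 + HH (Suc (Suc m))"
    by (simp add: HH_def field_simps)
  have p2: "pp (Suc (Suc (Suc m))) = F (Suc (Suc (Suc (Suc m)))) - F (Suc (Suc (Suc m))) / 2 + HH (Suc (Suc (Suc m)))"
    by (simp add: HH_def field_simps)
  have f: "F (Suc (Suc m)) = F m + F (Suc m)" "F (Suc (Suc (Suc m))) = F (Suc m) + F (Suc (Suc m))"
    "F (Suc (Suc (Suc (Suc m)))) = F (Suc (Suc m)) + F (Suc (Suc (Suc m)))" by simp_all
  have e: "RR (Suc (Suc m)) = 7 * F (Suc (Suc m)) / 5 + 2 * (F (Suc (Suc (Suc m))) - F (Suc (Suc m)) / 2 + HH (Suc (Suc m)))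
     - (F (Suc (Suc (Suc (Suc m)))) - F (Suc (Suc (Suc m))) / 2 + HH (Suc (Suc (Suc m))))"
    unfolding RR_def p1[symmetric] p2[symmetric] by simp
  have h2: "HH (Suc (Suc m)) \<le> 1" "- HH (Suc (Suc m)) \<le> 1"
    "HH (Suc (Suc (Suc m))) \<le> 1" "- HH (Suc (Suc (Suc m))) \<le> 1" using h by auto
  show ?thesis unfolding e f(3) f(2) f(1)
    by (rule RR_aux) (use a h in auto)
qed

lemma V_aux: "(b::real) > 0 \<Longrightarrow> D > 0 \<Longrightarrow>
  (D * (4*b + 3*a) / 5 + R) / (4*b) / D = (4 + 3*(a/b))/20 + R/(4*D*b)"
  by (simp add: field_simps)

theorem V_lim: "(\<lambda>n. V_S n / real n) \<longlonglongrightarrow> (5 + 3 * sqrt 5) / 40"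
proof (rule LIMSEQ_offset[where k = 2])
  define r where "r = (\<lambda>m. F m / F (Suc m))"
  define A where "A m = (4 + 3 * r m) / 20" for m
  define B where "B m = RR (Suc (Suc m)) / (4 * real (Suc (Suc m)) * F (Suc m))" for m
  have eq: "V_S (m + 2) / real (m + 2) = A m + B m" for m
  proof -
    have pos: "F (Suc m) > 0" using F_pos[of m] by simp
    have d: "2 + real m > 0" by simp
    have "V_S (m + 2) / real (m + 2) = qq (Suc (Suc m)) / (4 * F (Suc m)) / real (Suc (Suc m))"
      using V_S_eq[of m] by simp
    also have "\<dots> = (real (Suc (Suc m)) * (4 * F (Suc m) + 3 * F m) / 5 + RR (Suc (Suc m))) / (4 * F (Suc m)) / real (Suc (Suc m))"
      unfolding qq_closed by simp
    also have "\<dots> = A m + B m"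
      unfolding A_def B_def r_def by (rule V_aux) (use pos in simp_all)
    finally show ?thesis .
  qed
  have rl: "r \<longlonglongrightarrow> (sqrt 5 - 1) / 2" unfolding r_def by (rule r_lim)
  have "A \<longlonglongrightarrow> (4 + 3 * ((sqrt 5 - 1) / 2)) / 20"
    unfolding A_def by (intro tendsto_intros rl) simp
  moreover have "B \<longlonglongrightarrow> 0"
  proof (rule Lim_null_comparison)
    show "(\<lambda>m. 5 / real (Suc m)) \<longlonglongrightarrow> 0"
      by (rule LIMSEQ_Suc) (rule lim_const_over_n)
    show "\<forall>\<^sub>F m in sequentially. norm (B m) \<le> 5 / real (Suc m)"
    proof (rule always_eventually, rule allI)
      fix m
      have pos: "F (Suc m) \<ge> 1" using F_pos[of m] by simp
      have "norm (B m) = \<bar>RR (Suc (Suc m))\<bar> / (4 * real (Suc (Suc m)) * F (Suc m))"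
        unfolding B_def using pos by (simp add: abs_mult)
      also have "\<dots> \<le> 20 * F (Suc m) / (4 * real (Suc (Suc m)) * F (Suc m))"
        using pos RR_bound[of m] by (intro divide_right_mono) auto
      also have "\<dots> = 5 / real (Suc (Suc m))" by (rule aux2) (use pos in auto)
      also have "\<dots> \<le> 5 / real (Suc m)" by (intro divide_left_mono) auto
      finally show "norm (B m) \<le> 5 / real (Suc m)" .
    qed
  qed
  ultimately have "(\<lambda>m. A m + B m) \<longlonglongrightarrow> (4 + 3 * ((sqrt 5 - 1) / 2)) / 20 + 0"
    by (rule tendsto_add)
  moreover have "(4 + 3 * ((sqrt 5 - 1) / 2)) / 20 + 0 = (5 + 3 * sqrt 5) / (40::real)"
    by (simp add: field_simps)
  ultimately show "(\<lambda>m. V_S (m + 2) / real (m + 2)) \<longlonglongrightarrow> (5 + 3 * sqrt 5) / 40"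
    by (simp only: eq)
qed

theorem E_lim: "(\<lambda>n. E_S n / real n) \<longlonglongrightarrow> 1 / 2"
proof (rule LIMSEQ_offset[where k = 2])
  have e: "E_S (m + 2) / real (m + 2) = 1 / 2" for m
    using E_S_eq[of m] by simp
  have "(\<lambda>m. E_S (m + 2) / real (m + 2)) = (\<lambda>m. 1 / 2)"
    by (rule ext) (rule e)
  then show "(\<lambda>m. E_S (m + 2) / real (m + 2)) \<longlonglongrightarrow> 1 / 2" by (simp only:) (rule tendsto_const)
qed

theorem mainTheorem1:
  shows "((\<lambda>n. E_S n / real n) \<longlonglongrightarrow> 1 / 2) \<and>
         ((\<lambda>n. V_S n / real n) \<longlonglongrightarrow> (5 + 3 * sqrt 5) / 40)"
  using E_lim V_lim by blast

end
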